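(* Let $a,b\in\mathbb{C}$ with $\Re(b)>0$, $\Re(b+a)>0$, $\Re(b-a)>0$, $\frac32\pm\frac{a}{2b}\notin\mathbb{Z}_0^-$ and $\frac ab\notin\{\pm1,\pm3,\pm5,\dots\}$. Then $$ {}_4F_3\!\left(\begin{matrix}2,\ 2,\ \frac12+\frac{a}{2b},\ \frac12-\frac{a}{2b}\\ 1,\ \frac52+\frac{a}{2b},\ \frac52-\frac{a}{2b}\end{matrix};\,1\right) =\frac{9b^2-a^2}{8b^2}\;{}_3F_2\!\left(\begin{matrix}1,\ \frac12-\frac{a}{2b},\ \frac12+\frac{a}{2b}\\ \frac32-\frac{a}{2b},\ \frac32+\frac{a}{2b}\end{matrix};\,1\right). $$
   Context: $\mathbb{Z}_0^-=\{0,-1,-2,\dots\}$. The Pochhammer symbol is $(\lambda)_0=1$, $(\lambda)_n=\lambda(\lambda+1)\cdots(\lambda+n-1)$ for $n\ge1$. The generalized hypergeometric series is ${}_pF_q\!\left(\begin{matrix}\alpha_1,\dots,\alpha_p\\ \beta_1,\dots,\beta_q\end{matrix};z\right)=\sum_{n=0}^\infty\frac{(\alpha_1)_n\cdots(\alpha_p)_n}{(\beta_1)_n\cdots(\beta_q)_n}\frac{z^n}{n!}$ (with no $\beta_j\in\mathbb{Z}_0^-$). *)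

theory Defs
  imports "HOL-Analysis.Analysis"
begin

definition nonpos_ints_c :: "complex set" where
  "nonpos_ints_c = {z. \<exists>n::nat. z = - of_nat n}"

definition hypergeo :: "complex list \<Rightarrow> complex list \<Rightarrow> complex \<Rightarrow> complex" where
  "hypergeo as bs z = (\<Sum>n. (prod_list (map (\<lambda>a. pochhammer a n) as)
        / prod_list (map (\<lambda>b. pochhammer b n) bs)) * z ^ n / fact n)"

end

theory Submission imports Defs begin

lemma poch1: fixes z :: complex
  shows "pochhammer z n * (z + of_nat n) = z * pochhammer (z+1) n"
  by (metis pochhammer_Suc pochhammer_rec)

lemma poch2: fixes z :: complex
  shows "pochhammer z n * ((z + of_nat n) * (z + of_nat n + 1)) = z * (z+1) * pochhammer (z+2) n"
proof -
  have "pochhammer z n * ((z + of_nat n) * (z + of_nat n + 1))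
      = (pochhammer z n * (z + of_nat n)) * (z + of_nat n + 1)" by (simp add: algebra_simps)
  also have "\<dots> = z * (pochhammer (z+1) n * ((z+1) + of_nat n))" by (subst poch1) (simp add: algebra_simps)
  also have "pochhammer (z+1) n * ((z+1) + of_nat n) = (z+1) * pochhammer (z+1+1) n" by (rule poch1)
  also have "z+1+1 = z+2" by simp
  finally show ?thesis by (simp add: algebra_simps)
qed

lemma alg0: fixes d0 d1 n P :: complex
  assumes "d0 \<noteq> 0" "d1 \<noteq> 0" "d1 - d0 = 2*(n+1)"
  shows "(n + 1)^2 * P / (d0 * d1) = P / (2*d0) * (n + 1) - P * (n+1)/(2*d1)"
proof -
  have "P / (2*d0) * (n + 1) - P * (n+1)/(2*d1) = P * (n+1) * (d1 - d0) / (2*d0*d1)"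
    using assms(1,2) by (simp add: divide_simps) (simp add: algebra_simps)
  also have "\<dots> = (n + 1)^2 * P / (d0 * d1)" unfolding assms(3) using assms(1,2) by (simp add: power2_eq_square field_simps)
  finally show ?thesis by simp
qed

lemma alg: fixes d0 d1 p n :: complex
  assumes "d0 \<noteq> 0" "d1 \<noteq> 0" "d0 = n*(n+1) + p*(1-p)" "d1 = (n+1)*(n+2) + p*(1-p)"
  shows "(n + 1)^2 * (p*(p+1)*(1-p)*(1-p+1)) / (d0 * d1)
       = (p+1)*(1-p+1)/2 * (p*(1-p) / d0) + p*(p+1)*(1-p)*(1-p+1) * (n / (2*d0) - (n+1)/(2*d1))"
proof -
  define P where "P = p*(p+1)*(1-p)*(1-p+1)"
  have dd: "d1 - d0 = 2*(n+1)" unfolding assms(3,4) by (simp add: algebra_simps)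
  have "(p+1)*(1-p+1)/2 * (p*(1-p) / d0) = P / (2*d0)" unfolding P_def by (simp add: mult_ac)
  moreover have "P * (n / (2*d0) - (n+1)/(2*d1)) = P / (2*d0) * n - P * (n+1)/(2*d1)"
    by (simp add: right_diff_distrib)
  ultimately have "(p+1)*(1-p+1)/2 * (p*(1-p) / d0) + P * (n / (2*d0) - (n+1)/(2*d1))
     = P / (2*d0) * (n + 1) - P * (n+1)/(2*d1)" by (simp add: distrib_left)
  also have "\<dots> = (n + 1)^2 * P / (d0 * d1)" using alg0[OF assms(1,2) dd] by simp
  finally show ?thesis unfolding P_def by simp
qed

lemma key_identity:
  fixes p q :: complex and n :: nat
  assumes q: "q = 1 - p" and hp: "\<forall>k::nat. p + of_nat k \<noteq> 0" and hq: "\<forall>k::nat. q + of_nat k \<noteq> 0"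
  defines "D \<equiv> \<lambda>m::nat. (p + of_nat m) * (q + of_nat m)"
  defines "g \<equiv> \<lambda>m::nat. of_nat m / (2 * D m)"
  shows "(of_nat n + 1)^2 * (p*(p+1)*q*(q+1)) / (D n * D (Suc n))
       = (p+1)*(q+1)/2 * (p*q / D n) + p*(p+1)*q*(q+1) * (g n - g (Suc n))"
proof -
  have d: "D n \<noteq> 0" "D (Suc n) \<noteq> 0" unfolding D_def using hp hq hp[rule_format, of "Suc n"] hq[rule_format, of "Suc n"] by (auto simp: add_ac)
  have e: "D n = of_nat n * (of_nat n + 1) + p*(1-p)" "D (Suc n) = (of_nat n+1) * (of_nat n + 2) + p*(1-p)"
    unfolding D_def q by (simp_all add: algebra_simps)
  show ?thesis unfolding g_def q using alg[OF d e] by (simp add: add_ac)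
qed


lemma poch_nz: fixes z :: complex
  assumes "\<forall>k::nat. z + of_nat k \<noteq> 0" shows "pochhammer z n \<noteq> 0"
  using assms by (auto simp: pochhammer_eq_0_iff)

lemma shift_nz: fixes z :: complex
  assumes "\<forall>k::nat. z + of_nat k \<noteq> 0" shows "\<forall>k::nat. z + of_nat m + of_nat k \<noteq> 0"
proof
  fix k have "z + of_nat m + of_nat k = z + of_nat (m+k)" by (simp add: add.assoc)
  then show "z + of_nat m + of_nat k \<noteq> 0" using assms by metis
qed

lemma poch_two: "pochhammer (2::complex) n = (of_nat n + 1) * fact n"
proof -
  have "fact (Suc n) = pochhammer (1::complex) (Suc n)" by (rule pochhammer_fact)
  also have "\<dots> = pochhammer 2 n" by (simp add: pochhammer_rec)
  finally show ?thesis by (simp add: algebra_simps)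
qed

lemma poch_ratio1: fixes z :: complex
  assumes "\<forall>k::nat. z + of_nat k \<noteq> 0"
  shows "pochhammer z n / pochhammer (z+1) n = z / (z + of_nat n)"
proof -
  have a: "z + of_nat n \<noteq> 0" using assms by blast
  have b: "pochhammer (z+1) n \<noteq> 0" using poch_nz[OF shift_nz[OF assms, of 1]] by simp
  have "pochhammer z n * (z + of_nat n) = z * pochhammer (z+1) n" by (rule poch1)
  then show ?thesis using a b by (subst frac_eq_eq) (auto simp: mult.commute)
qed

lemma poch_ratio2: fixes z :: complex
  assumes "\<forall>k::nat. z + of_nat k \<noteq> 0"
  shows "pochhammer z n / pochhammer (z+2) n = z * (z+1) / ((z + of_nat n) * (z + of_nat n + 1))"
proof -
  have a: "z + of_nat n \<noteq> 0" using assms by blast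
  have a2: "z + of_nat n + 1 \<noteq> 0" using shift_nz[OF assms, of n] by (metis of_nat_1)
  have b: "pochhammer (z+2) n \<noteq> 0" using poch_nz[OF shift_nz[OF assms, of 2]] by simp
  have "pochhammer z n * ((z + of_nat n) * (z + of_nat n + 1)) = z * (z+1) * pochhammer (z+2) n" by (rule poch2)
  then show ?thesis using a a2 b by (subst frac_eq_eq) (auto simp: mult.commute)
qed

lemma D_bound:
  fixes p :: complex and n :: nat
  assumes "real n \<ge> norm (p*(1-p))"
  shows "norm ((p + of_nat n) * (1 - p + of_nat n)) \<ge> real n ^ 2"
proof -
  have e: "(p + of_nat n) * (1 - p + of_nat n) = of_nat (n*n + n) + p*(1-p)"
    by (simp add: algebra_simps)
  have "norm (of_nat (n*n + n) :: complex) - norm (- (p*(1-p))) \<le> norm (of_nat (n*n + n) - (- (p*(1-p))) :: complex)"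
    by (rule norm_triangle_ineq2)
  then have "real (n*n+n) - norm (p*(1-p)) \<le> norm ((p + of_nat n) * (1 - p + of_nat n))"
    unfolding e by (simp only: norm_of_nat norm_minus_cancel diff_minus_eq_add)
  then show ?thesis using assms by (simp add: power2_eq_square)
qed

lemma general:
  fixes p q :: complex
  assumes q: "q = 1 - p" and hp: "\<forall>k::nat. p + of_nat k \<noteq> 0" and hq: "\<forall>k::nat. q + of_nat k \<noteq> 0"
  shows "hypergeo [2,2,p,q] [1,p+2,q+2] 1 = (p+1)*(q+1)/2 * hypergeo [1,q,p] [q+1,p+1] 1"
proof -
  define D where "D = (\<lambda>m::nat. (p + of_nat m) * (q + of_nat m))"
  define g where "g = (\<lambda>m::nat. of_nat m / (2 * D m) :: complex)"
  define R where "R = (\<lambda>n::nat. p*q / D n)"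
  define P where "P = p*(p+1)*q*(q+1)"
  define K where "K = (p+1)*(q+1)/2"
  have fnz: "\<And>n. (fact n :: complex) \<noteq> 0" by simp
  have Rterm: "prod_list (map (\<lambda>a. pochhammer a n) [1,q,p]) / prod_list (map (\<lambda>b. pochhammer b n) [q+1,p+1]) * 1^n / fact n = R n" for n
  proof -
    have "prod_list (map (\<lambda>a. pochhammer a n) [1,q,p]) / prod_list (map (\<lambda>b. pochhammer b n) [q+1,p+1]) * 1^n / fact n
      = (pochhammer q n / pochhammer (q+1) n) * (pochhammer p n / pochhammer (p+1) n) * (fact n / fact n)"
      by (simp add: pochhammer_fact[symmetric])
    also have "\<dots> = q / (q + of_nat n) * (p / (p + of_nat n))"
      using poch_ratio1[OF hp, of n] poch_ratio1[OF hq, of n] fnz[of n] by simp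
    also have "\<dots> = R n" unfolding R_def D_def by (simp add: mult.commute)
    finally show ?thesis .
  qed
  have Lterm: "prod_list (map (\<lambda>a. pochhammer a n) [2,2,p,q]) / prod_list (map (\<lambda>b. pochhammer b n) [1,p+2,q+2]) * 1^n / fact n
      = (of_nat n + 1)^2 * P / (D n * D (Suc n))" for n
  proof -
    have "prod_list (map (\<lambda>a. pochhammer a n) [2,2,p,q]) / prod_list (map (\<lambda>b. pochhammer b n) [1,p+2,q+2]) * 1^n / fact n
      = (of_nat n + 1)^2 * (pochhammer p n / pochhammer (p+2) n) * (pochhammer q n / pochhammer (q+2) n) * (fact n / fact n) * (fact n / fact n)"
      by (simp add: pochhammer_fact[symmetric] poch_two power2_eq_square)
    also have "\<dots> = (of_nat n + 1)^2 * (p * (p+1) / ((p + of_nat n) * (p + of_nat n + 1))) * (q * (q+1) / ((q + of_nat n) * (q + of_nat n + 1)))"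
      using poch_ratio2[OF hp, of n] poch_ratio2[OF hq, of n] fnz[of n] by simp
    finally show ?thesis unfolding P_def D_def by (simp add: algebra_simps)
  qed
  define N where "N = nat \<lceil>norm (p*(1-p))\<rceil> + 1"
  have Nbd: "norm (p*(1-p)) \<le> real n" if "n \<ge> N" for n
  proof -
    have "norm (p*(1-p)) \<le> real (nat \<lceil>norm (p*(1-p))\<rceil>)" by linarith
    also have "\<dots> \<le> real n" using that by (simp add: N_def)
    finally show ?thesis .
  qed
  have Dbd: "norm (D n) \<ge> real n ^ 2" if "n \<ge> N" for n
    unfolding D_def q by (rule D_bound) (rule Nbd[OF that])
  have Dpos: "norm (D n) > 0" if "n \<ge> N" for n
  proof -
    have "real n ^ 2 > 0" using that by (simp add: N_def)
    then show ?thesis using Dbd[OF that] by linarith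
  qed
  have sumR: "summable R"
  proof (rule summable_comparison_test')
    show "summable (\<lambda>n. norm (p*q) * inverse (real n ^ 2))"
      by (rule summable_mult) (rule inverse_power_summable, simp)
    show "norm (R n) \<le> norm (p*q) * inverse (real n ^ 2)" if "n \<ge> N" for n
    proof -
      have "norm (R n) = norm (p*q) / norm (D n)" unfolding R_def by (simp add: norm_divide)
      also have "\<dots> \<le> norm (p*q) / real n ^ 2"
      proof (rule divide_left_mono)
        have "real n ^ 2 > 0" using that by (simp add: N_def)
        then show "0 < norm (D n) * real n ^ 2" using Dpos[OF that] by simp
      qed (use Dbd[OF that] in auto)
      finally show ?thesis by (simp add: divide_inverse)
    qed
  qed
  have glim: "g \<longlonglongrightarrow> 0"
  proof (rule Lim_null_comparison)
    show "\<forall>\<^sub>F n in sequentially. norm (g n) \<le> 1 / real n"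
      unfolding eventually_sequentially
    proof (intro exI allI impI)
      fix n assume n: "n \<ge> N"
      have np: "real n > 0" using n by (simp add: N_def)
      have "norm (g n) = real n / (2 * norm (D n))" unfolding g_def by (simp add: norm_divide norm_mult)
      also have "\<dots> \<le> real n / (2 * real n ^ 2)"
        using Dbd[OF n] np Dpos[OF n] by (intro divide_left_mono) (auto intro!: mult_pos_pos)
      also have "\<dots> \<le> 1 / real n" using np by (simp add: field_simps power2_eq_square)
      finally show "norm (g n) \<le> 1 / real n" .
    qed
    show "(\<lambda>n. 1 / real n) \<longlonglongrightarrow> 0" by (rule lim_inverse_n')
  qed
  have tel: "(\<lambda>n. g n - g (Suc n)) sums (g 0 - 0)" by (rule telescope_sums'[OF glim])
  have "(\<lambda>n. K * R n + P * (g n - g (Suc n))) sums (K * suminf R + P * (g 0 - 0))"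
    by (intro sums_add sums_mult summable_sums sumR tel)
  moreover have "(\<lambda>n. K * R n + P * (g n - g (Suc n))) = (\<lambda>n. (of_nat n + 1)^2 * P / (D n * D (Suc n)))"
  proof
    fix n show "K * R n + P * (g n - g (Suc n)) = (of_nat n + 1)^2 * P / (D n * D (Suc n))"
      using key_identity[OF q hp hq, of n] unfolding K_def R_def P_def g_def D_def by simp
  qed
  ultimately have "(\<lambda>n. (of_nat n + 1)^2 * P / (D n * D (Suc n))) sums (K * suminf R)"
    by (simp add: g_def)
  then have "hypergeo [2,2,p,q] [1,p+2,q+2] 1 = K * suminf R"
    unfolding hypergeo_def Lterm by (rule sums_unique[symmetric])
  moreover have "hypergeo [1,q,p] [q+1,p+1] 1 = suminf R"
    unfolding hypergeo_def Rterm ..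
  ultimately show ?thesis unfolding K_def by simp
qed

theorem mainTheorem11:
  fixes a b :: complex
  assumes "Re b > 0" and "Re (b + a) > 0" and "Re (b - a) > 0"
    and "3/2 + a / (2*b) \<notin> nonpos_ints_c" and "3/2 - a / (2*b) \<notin> nonpos_ints_c"
    and "\<forall>k::nat. a / b \<noteq> of_nat (2*k+1) \<and> a / b \<noteq> - of_nat (2*k+1)"
  shows "hypergeo [2, 2, 1/2 + a/(2*b), 1/2 - a/(2*b)] [1, 5/2 + a/(2*b), 5/2 - a/(2*b)] 1
       = (9*b^2 - a^2) / (8*b^2) * hypergeo [1, 1/2 - a/(2*b), 1/2 + a/(2*b)] [3/2 - a/(2*b), 3/2 + a/(2*b)] 1"
proof -
  have b0: "b \<noteq> 0" using assms(1) by auto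
  define c where "c = a/(2*b)"
  define p where "p = 1/2 + c"
  define q where "q = 1/2 - c"
  have ab: "a / b = 2 * c" unfolding c_def using b0 by (simp add: field_simps)
  have q1: "q = 1 - p" unfolding p_def q_def by simp
  have hp: "\<forall>k::nat. p + of_nat k \<noteq> 0"
  proof (intro allI notI)
    fix k assume "p + of_nat k = 0"
    note h = this
    have "c = (p + of_nat k) - 1/2 - of_nat k" unfolding p_def by simp
    then have c1: "c = 0 - 1/2 - of_nat k" unfolding h .
    have "2 * c = - of_nat (2*k+1)" unfolding c1 by (simp add: algebra_simps)
    then show False using assms(6) ab by auto
  qed
  have hq: "\<forall>k::nat. q + of_nat k \<noteq> 0"
  proof (intro allI notI)
    fix k assume "q + of_nat k = 0"
    note h = this
    have "c = 1/2 + of_nat k - (q + of_nat k)" unfolding q_def by simp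
    then have c1: "c = 1/2 + of_nat k - 0" unfolding h .
    have "2 * c = of_nat (2*k+1)" unfolding c1 by (simp add: algebra_simps)
    then show False using assms(6) ab by auto
  qed
  have G: "hypergeo [2,2,p,q] [1,p+2,q+2] 1 = (p+1)*(q+1)/2 * hypergeo [1,q,p] [q+1,p+1] 1"
    by (rule general[OF q1 hp hq])
  have L1: "[2, 2, 1/2 + a/(2*b), 1/2 - a/(2*b)] = [2,2,p,q]" unfolding p_def q_def c_def by simp
  have L2: "[1, 5/2 + a/(2*b), 5/2 - a/(2*b)] = [1,p+2,q+2]" unfolding p_def q_def c_def by simp
  have L3: "[1, 1/2 - a/(2*b), 1/2 + a/(2*b)] = [1,q,p]" unfolding p_def q_def c_def by simp
  have L4: "[3/2 - a/(2*b), 3/2 + a/(2*b)] = [q+1,p+1]" unfolding p_def q_def c_def by simp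
  have F: "(9*b^2 - a^2) / (8*b^2) = (p+1)*(q+1)/2"
    unfolding p_def q_def c_def using b0 by (simp add: field_simps power2_eq_square)
  show ?thesis unfolding L1 L2 L3 L4 F by (rule G)
qed

end
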